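(* Let $F\in\mathrm{GL}^+(2)$ and $H\in\mathbb{R}^{2\times2}$ such that $\operatorname{rank}(H)=1$ and $F+H\in\mathrm{GL}^+(2)$. Then there exists at most one $t\in[0,1]$ such that $F+tH$ has non-simple singular values (i.e. its two singular values coincide).
   Context: $\mathrm{GL}^+(2)$ is the group of real invertible $2\times2$ matrices with positive determinant. *)

theory Defs
  imports "HOL-Analysis.Analysis"
begin

definition GLplus2 :: "(real^2^2) set" where
  "GLplus2 = {A. det A > 0}"

text \<open>Singular values of a real 2x2 matrix A: the square roots of the eigenvalues
  of transpose A ** A, counted with multiplicity, ordered decreasingly.\<close>
definition singular_values2 :: "real^2^2 \<Rightarrow> real \<times> real" where
  "singular_values2 A = (THE p. fst p \<ge> snd p \<and> snd p \<ge> 0 \<and>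
     (\<forall>x::real. det (x *\<^sub>R mat 1 - transpose A ** A) = (x - (fst p)^2) * (x - (snd p)^2)))"

definition nonsimple_sv :: "real^2^2 \<Rightarrow> bool" where
  "nonsimple_sv A \<longleftrightarrow> fst (singular_values2 A) = snd (singular_values2 A)"

end

theory Submission
  imports Defs
begin

lemma charpoly2:
  fixes A :: "real^2^2"
  shows "det (x *\<^sub>R mat 1 - transpose A ** A) =
    (x - (A$1$1^2 + A$2$1^2)) * (x - (A$1$2^2 + A$2$2^2)) - (A$1$1*A$1$2 + A$2$1*A$2$2)^2"
  by (simp add: det_2 matrix_matrix_mult_def sum_2 transpose_def mat_def power2_eq_square algebra_simps)

lemma quad_unique:
  fixes u v u2 v2 S T :: real
  assumes "u \<ge> v" "v \<ge> 0" "u2 \<ge> v2" "v2 \<ge> 0"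
   and "\<forall>x. (x - u^2) * (x - v^2) = x^2 - S*x + T"
   and "\<forall>x. (x - u2^2) * (x - v2^2) = x^2 - S*x + T"
  shows "u = u2 \<and> v = v2"
proof -
  have e0: "u^2 * v^2 = T" "u2^2 * v2^2 = T" using assms(5,6)[rule_format, of 0] by simp_all
  have e1: "u^2+v^2 = S" "u2^2+v2^2 = S" using assms(5,6)[rule_format, of 1] e0 by (simp_all add: algebra_simps)
  have "(u2^2 - u^2) * (u2^2 - v^2) = 0" using assms(5)[rule_format, of "u2^2"] assms(6)[rule_format, of "u2^2"]
    by simp
  hence h1: "u2^2 = u^2 \<or> u2^2 = v^2" by simp
  have "(u^2 - u2^2) * (u^2 - v2^2) = 0" using assms(5)[rule_format, of "u^2"] assms(6)[rule_format, of "u^2"]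
    by simp
  hence h2: "u^2 = u2^2 \<or> u^2 = v2^2" by simp
  have sq: "u^2 \<ge> v^2" "u2^2 \<ge> v2^2" using assms(1-4) by (simp_all add: power_mono)
  have "u^2 = u2^2" using h1 h2 sq e1 by auto
  moreover hence "v^2 = v2^2" using e1 by simp
  ultimately show ?thesis using assms(1-4)
    by (metis order_trans power2_eq_iff_nonneg)
qed

lemma sv_spec:
  fixes A :: "real^2^2"
  defines "P \<equiv> A$1$1^2 + A$2$1^2" and "R \<equiv> A$1$2^2 + A$2$2^2" and "Q \<equiv> A$1$1*A$1$2 + A$2$1*A$2$2"
  shows "fst (singular_values2 A) \<ge> snd (singular_values2 A) \<and> snd (singular_values2 A) \<ge> 0 \<and>
     (\<forall>x::real. x^2 - (P+R)*x + (P*R - Q^2) = (x - (fst (singular_values2 A))^2) * (x - (snd (singular_values2 A))^2))"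
proof -
  have cp: "\<And>x. det (x *\<^sub>R mat 1 - transpose A ** A) = x^2 - (P+R)*x + (P*R - Q^2)"
    unfolding charpoly2 P_def R_def Q_def by (simp add: algebra_simps power2_eq_square)
  define X where "X = (P-R)^2 + 4*Q^2"
  define D where "D = sqrt X"
  have X0: "X \<ge> 0" unfolding X_def by simp
  have PRQ: "P*R - Q^2 = (A$1$1*A$2$2 - A$1$2*A$2$1)^2"
    unfolding P_def R_def Q_def by (simp add: algebra_simps power2_eq_square)
  have PR0: "P + R \<ge> 0" unfolding P_def R_def by simp
  have "(P+R)^2 - X = 4 * (P*R - Q^2)" unfolding X_def by (simp add: algebra_simps power2_eq_square)
  hence "(P+R)^2 - X \<ge> 0" using PRQ by simp
  hence "X \<le> (P+R)^2" by linarith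
  hence DPR: "D \<le> P + R" unfolding D_def using PR0 real_sqrt_le_mono[of X "(P+R)^2"] by simp
  have D0: "D \<ge> 0" unfolding D_def using X0 by simp
  define l1 where "l1 = (P+R+D)/2"
  define l2 where "l2 = (P+R-D)/2"
  have l2: "l2 \<ge> 0" "l1 \<ge> l2" using DPR D0 unfolding l1_def l2_def by auto
  have DD: "D^2 = X" unfolding D_def using X0 by simp
  have id: "\<And>x. x^2 - (P+R)*x + (P*R - Q^2) = (x - l1) * (x - l2)"
  proof -
    fix x
    have "(x-l1)*(x-l2) = x^2 - (P+R)*x + ((P+R)^2 - D^2)/4"
      by (simp add: l1_def l2_def field_simps power2_eq_square)
    also have "\<dots> = x^2 - (P+R)*x + (P*R - Q^2)"
      unfolding DD X_def by (simp add: field_simps power2_eq_square)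
    finally show "x^2 - (P+R)*x + (P*R - Q^2) = (x - l1) * (x - l2)" by simp
  qed
  define p where "p = (sqrt l1, sqrt l2)"
  have pP: "fst p \<ge> snd p \<and> snd p \<ge> 0 \<and>
     (\<forall>x::real. det (x *\<^sub>R mat 1 - transpose A ** A) = (x - (fst p)^2) * (x - (snd p)^2))"
    unfolding p_def using l2 by (simp add: cp id real_sqrt_le_mono)
  have uq: "q = p" if "fst q \<ge> snd q \<and> snd q \<ge> 0 \<and>
     (\<forall>x::real. det (x *\<^sub>R mat 1 - transpose A ** A) = (x - (fst q)^2) * (x - (snd q)^2))" for q
  proof -
    have "fst q = fst p \<and> snd q = snd p"
      apply (rule quad_unique[where S="P+R" and T="P*R-Q^2"])
      using that pP by (auto simp: cp)
    thus ?thesis by (simp add: prod_eq_iff)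
  qed
  have "singular_values2 A = p" unfolding singular_values2_def
    using pP uq by (rule the_equality)
  thus ?thesis using pP by (simp add: cp)
qed

lemma nonsimple_conf:
  fixes A :: "real^2^2"
  assumes "nonsimple_sv A" "det A > 0"
  shows "A$1$1 = A$2$2 \<and> A$1$2 = - A$2$1"
proof -
  define P where "P \<equiv> A$1$1^2 + A$2$1^2"
  define R where "R \<equiv> A$1$2^2 + A$2$2^2"
  define Q where "Q \<equiv> A$1$1*A$1$2 + A$2$1*A$2$2"
  define s where "s = fst (singular_values2 A)"
  have ss: "snd (singular_values2 A) = s" using assms(1) unfolding nonsimple_sv_def s_def by simp
  have h: "\<forall>x::real. x^2 - (P+R)*x + (P*R - Q^2) = (x - s^2) * (x - s^2)"
    using sv_spec[of A] unfolding P_def R_def Q_def ss s_def by simp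
  have T: "P*R - Q^2 = s^2 * s^2" using h[rule_format, of 0] by simp
  have S: "P + R = 2 * s^2" using h[rule_format, of 1] T by (simp add: algebra_simps power2_eq_square)
  have "(P-R)^2 + 4*Q^2 = (P+R)^2 - 4*(P*R-Q^2)" by (simp add: algebra_simps power2_eq_square)
  also have "\<dots> = 0" using S T by (simp add: algebra_simps power2_eq_square)
  finally have "(P-R)^2 + 4*Q^2 = 0" .
  hence "(P-R)^2 + (2*Q)^2 = 0" by (simp add: power_mult_distrib)
  from sum_power2_eq_zero_iff[THEN iffD1, OF this] have "P - R = 0 \<and> 2*Q = 0" .
  hence PR: "P = R" "Q = 0" by simp_all
  have PRQ: "P*R - Q^2 = (det A)^2"
    unfolding P_def R_def Q_def det_2 by (simp add: algebra_simps power2_eq_square)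
  hence "P^2 = (det A)^2" using PR by (simp add: power2_eq_square)
  hence dP: "det A = P" using assms(2) unfolding P_def
    using power2_eq_iff_nonneg[of P "det A"] by simp
  have "(A$1$1 - A$2$2)^2 + (A$1$2 + A$2$1)^2 = P + R - 2 * det A"
    unfolding P_def R_def det_2 by (simp add: algebra_simps power2_eq_square)
  also have "\<dots> = 0" using dP PR by simp
  finally have "(A$1$1 - A$2$2)^2 + (A$1$2 + A$2$1)^2 = 0" .
  thus ?thesis by (simp add: sum_power2_eq_zero_iff)
qed

theorem corollary3p10:
  fixes F H :: "real^2^2"
  assumes "F \<in> GLplus2"
    and "rank H = 1"
    and "F + H \<in> GLplus2"
  shows "\<forall>s\<in>{0..1}. \<forall>t\<in>{0..1}. nonsimple_sv (F + s *\<^sub>R H) \<and> nonsimple_sv (F + t *\<^sub>R H) \<longrightarrow> s = t"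
proof (intro ballI impI)
  fix s t :: real
  assume st: "s \<in> {0..1}" "t \<in> {0..1}" and ns: "nonsimple_sv (F + s *\<^sub>R H) \<and> nonsimple_sv (F + t *\<^sub>R H)"
  have dH: "det H = 0" using assms(2) det_eq_0_rank[of H] by simp
  have H0: "H \<noteq> 0" using assms(2) rank_eq_0[of H] by simp
  have dF: "det F > 0" "det (F + H) > 0" using assms(1,3) unfolding GLplus2_def by auto
  have detlin: "det (F + u *\<^sub>R H) = (1-u) * det F + u * det (F + H) + (u^2 - u) * det H" for u
    unfolding det_2 by (simp add: algebra_simps power2_eq_square)
  have pos: "det (F + u *\<^sub>R H) > 0" if "u \<in> {0..1}" for u
  proof -
    have "det (F + u *\<^sub>R H) = (1-u) * det F + u * det (F + H)" using detlin[of u] dH by simp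
    moreover have "(1-u) * det F \<ge> 0" "u * det (F + H) \<ge> 0" using that dF by auto
    moreover have "(1-u) * det F > 0 \<or> u * det (F + H) > 0" using that dF
      by (cases "u = 1") auto
    ultimately show ?thesis by linarith
  qed
  have cs: "F$1$1 + s * H$1$1 = F$2$2 + s * H$2$2 \<and> F$1$2 + s * H$1$2 = - (F$2$1 + s * H$2$1)"
    using nonsimple_conf[of "F + s *\<^sub>R H"] ns pos[OF st(1)] by simp
  have ct: "F$1$1 + t * H$1$1 = F$2$2 + t * H$2$2 \<and> F$1$2 + t * H$1$2 = - (F$2$1 + t * H$2$1)"
    using nonsimple_conf[of "F + t *\<^sub>R H"] ns pos[OF st(2)] by simp
  show "s = t"
  proof (rule ccontr)
    assume "s \<noteq> t"
    have "(s - t) * (H$1$1 - H$2$2) = 0" "(s - t) * (H$1$2 + H$2$1) = 0"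
      using cs ct by (simp_all add: algebra_simps)
    hence e: "H$1$1 = H$2$2" "H$1$2 = - H$2$1" using \<open>s \<noteq> t\<close> by simp_all
    have "H$1$1^2 + H$1$2^2 = 0" using dH e unfolding det_2 by (simp add: power2_eq_square)
    hence "H$1$1 = 0 \<and> H$1$2 = 0" by (simp add: sum_power2_eq_zero_iff)
    hence "H = 0" using e by (simp add: vec_eq_iff forall_2)
    thus False using H0 by simp
  qed
qed

end
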